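(* Let $G=(V,E,t)$ be a threshold graph with type partition $V_1,\dots,V_{\mathrm{nd}}$, and fix $i\in[\mathrm{nd}]$. (i) Let $X\subseteq V$ satisfy $X=D_{G[X]}$, let $Y=Y(X)$, and let $u_{\max}$ be a node of maximum threshold in $X\cap V_i$. If there exists $v\in Y\cap V_i$ with $t(v)\le t(u_{\max})$, then $X'=(X\setminus\{u_{\max}\})\cup\{v\}$ satisfies $X'=D_{G[X']}$ and $|Y(X')|=|Y|$. (ii) Let $Y\subseteq V$ and let $v_{\max}$ be a node of maximum threshold in $Y\cap V_i$. If there exists $u\in D_{G,Y}\cap V_i$ with $t(u)\le t(v_{\max})$, then $Y'=(Y\setminus\{v_{\max}\})\cup\{u\}$ satisfies $|D_{G,Y'}|\le|D_{G,Y}|$.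
   Context: A threshold graph is an undirected graph $G=(V,E,t)$ with threshold function $t:V\to\mathbb{N}$; $\Gamma_G(v)$ denotes the neighborhood of $v$. Given $Y\subseteq V$ (the immunized nodes), the diffusion process in $G$ is the sequence $D_{G,Y}[1]\subseteq D_{G,Y}[2]\subseteq\cdots$ with $D_{G,Y}[1]=\{u\in V\setminus Y: t(u)=0\}$ and $D_{G,Y}[\tau]=D_{G,Y}[\tau-1]\cup\{u\in V\setminus Y: |\Gamma_G(u)\cap D_{G,Y}[\tau-1]|\ge t(u)\}$; it stabilizes, and $D_{G,Y}$ denotes the final set. Write $D_G=D_{G,\emptyset}$. For $X\subseteq V$, $G[X]$ is the induced subgraph with thresholds restricted from $t$, and $Y(X)=\{u\in V\setminus X: |\Gamma_G(u)\cap D_{G[X]}|\ge t(u)\}$. Two nodes $u,v$ have the same type if $\Gamma_G(v)\setminus\{u\}=\Gamma_G(u)\setminus\{v\}$; a type partition $V_1,\dots,V_{\mathrm{nd}}$ is a partition of $V$ into classes whose nodes all have the same type. *)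

theory Defs
  imports Main
begin

definition threshold_graph :: "'a set \<Rightarrow> ('a \<Rightarrow> 'a \<Rightarrow> bool) \<Rightarrow> ('a \<Rightarrow> nat) \<Rightarrow> bool" where
  "threshold_graph V E t \<longleftrightarrow> finite V \<and> (\<forall>u v. E u v \<longrightarrow> u \<in> V \<and> v \<in> V)
     \<and> (\<forall>u v. E u v \<longrightarrow> E v u) \<and> (\<forall>u. \<not> E u u)"

text \<open>Neighbourhood of v in the graph with vertex set V (for an induced subgraph G[X],
  use V = X).\<close>
definition nbr :: "'a set \<Rightarrow> ('a \<Rightarrow> 'a \<Rightarrow> bool) \<Rightarrow> 'a \<Rightarrow> 'a set" where
  "nbr V E v = {u \<in> V. E v u}"

text \<open>diff_seq V E t Y k is D_{G,Y}[k+1] (the paper indexes from 1).\<close>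
fun diff_seq :: "'a set \<Rightarrow> ('a \<Rightarrow> 'a \<Rightarrow> bool) \<Rightarrow> ('a \<Rightarrow> nat) \<Rightarrow> 'a set \<Rightarrow> nat \<Rightarrow> 'a set" where
  "diff_seq V E t Y 0 = {u \<in> V - Y. t u = 0}"
| "diff_seq V E t Y (Suc k) = diff_seq V E t Y k \<union>
     {u \<in> V - Y. card (nbr V E u \<inter> diff_seq V E t Y k) \<ge> t u}"

definition diffusion :: "'a set \<Rightarrow> ('a \<Rightarrow> 'a \<Rightarrow> bool) \<Rightarrow> ('a \<Rightarrow> nat) \<Rightarrow> 'a set \<Rightarrow> 'a set" where
  "diffusion V E t Y = (\<Union>k. diff_seq V E t Y k)"

text \<open>Y(X) = {u in V \ X : |Gamma_G(u) \<inter> D_{G[X]}| \<ge> t(u)}, where G[X] has vertex set X,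
  adjacency restricted to X and the restricted thresholds.\<close>
definition Yset :: "'a set \<Rightarrow> ('a \<Rightarrow> 'a \<Rightarrow> bool) \<Rightarrow> ('a \<Rightarrow> nat) \<Rightarrow> 'a set \<Rightarrow> 'a set" where
  "Yset V E t X = {u \<in> V - X. card (nbr V E u \<inter> diffusion X E t {}) \<ge> t u}"

definition same_type :: "'a set \<Rightarrow> ('a \<Rightarrow> 'a \<Rightarrow> bool) \<Rightarrow> 'a \<Rightarrow> 'a \<Rightarrow> bool" where
  "same_type V E u v \<longleftrightarrow> nbr V E v - {u} = nbr V E u - {v}"

definition type_partition :: "'a set \<Rightarrow> ('a \<Rightarrow> 'a \<Rightarrow> bool) \<Rightarrow> (nat \<Rightarrow> 'a set) \<Rightarrow> nat \<Rightarrow> bool" where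
  "type_partition V E Vs nd \<longleftrightarrow>
     (\<Union>i\<in>{1..nd}. Vs i) = V
     \<and> (\<forall>i\<in>{1..nd}. Vs i \<noteq> {})
     \<and> (\<forall>i\<in>{1..nd}. \<forall>j\<in>{1..nd}. i \<noteq> j \<longrightarrow> Vs i \<inter> Vs j = {})
     \<and> (\<forall>i\<in>{1..nd}. \<forall>u\<in>Vs i. \<forall>v\<in>Vs i. same_type V E u v)"

end

theory Submission
  imports Defs
begin

lemma ds_sub: "diff_seq W E t Y k \<subseteq> W - Y"
  by (induct k) auto

lemma ds_mono: "mono (diff_seq W E t Y)"
  unfolding mono_iff_le_Suc by auto

lemma diffusion_sub: "diffusion W E t Y \<subseteq> W - Y"
  unfolding diffusion_def by (intro UN_least ds_sub)

lemma finite_in_chain: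
  assumes "finite A" "mono (D :: nat \<Rightarrow> 'b set)" "A \<subseteq> (\<Union>k. D k)"
  shows "\<exists>k. A \<subseteq> D k"
  using assms
proof (induction A rule: finite_induct)
  case empty then show ?case by auto
next
  case (insert x A)
  then obtain k1 where k1: "A \<subseteq> D k1" by auto
  from insert obtain k2 where k2: "x \<in> D k2" by auto
  have "D k1 \<subseteq> D (max k1 k2)" "D k2 \<subseteq> D (max k1 k2)"
    using monoD[OF insert(4), of k1 "max k1 k2"] monoD[OF insert(4), of k2 "max k1 k2"] by simp_all
  then show ?case using k1 k2 by blast
qed

lemma diffusion_closed:
  assumes "finite W" "x \<in> W - Y" "t x \<le> card (nbr W E x \<inter> diffusion W E t Y)"
  shows "x \<in> diffusion W E t Y"
proof -
  let ?A = "nbr W E x \<inter> diffusion W E t Y"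
  have fin: "finite ?A" using assms(1) unfolding nbr_def by auto
  obtain k where k: "?A \<subseteq> diff_seq W E t Y k"
    using finite_in_chain[OF fin ds_mono] unfolding diffusion_def by blast
  have "?A = nbr W E x \<inter> diff_seq W E t Y k"
    using k unfolding diffusion_def by blast
  then have "x \<in> diff_seq W E t Y (Suc k)" using assms(2,3) by auto
  then show ?thesis unfolding diffusion_def by blast
qed

lemma diffusion_count:
  assumes "finite W"
  shows "x \<in> diff_seq W E t Y k \<Longrightarrow> t x \<le> card (nbr W E x \<inter> diffusion W E t Y)"
proof (induction k)
  case 0 then show ?case by auto
next
  case (Suc k)
  show ?case
  proof (cases "x \<in> diff_seq W E t Y k")
    case True then show ?thesis using Suc by auto
  next
    case False
    then have "t x \<le> card (nbr W E x \<inter> diff_seq W E t Y k)" using Suc.prems by auto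
    also have "\<dots> \<le> card (nbr W E x \<inter> diffusion W E t Y)"
      apply (rule card_mono)
      using assms unfolding nbr_def diffusion_def by auto
    finally show ?thesis .
  qed
qed

lemma swap_inj: "b \<notin> A \<Longrightarrow> inj_on (\<lambda>z. if z = a then b else z) A"
  unfolding inj_on_def by auto

lemma same_type_adj:
  assumes G: "threshold_graph V E t" and st: "same_type V E a b"
    and "w \<noteq> a" "w \<noteq> b"
  shows "E w a \<longleftrightarrow> E w b"
proof -
  have sym: "\<And>x y. E x y \<Longrightarrow> E y x" and inV: "\<And>x y. E x y \<Longrightarrow> x \<in> V \<and> y \<in> V"
    using G unfolding threshold_graph_def by blast+
  have eq: "nbr V E b - {a} = nbr V E a - {b}" using st unfolding same_type_def by auto
  show ?thesis
  proof
    assume "E w a"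
    then have "w \<in> nbr V E a - {b}" using sym inV assms(4) unfolding nbr_def by auto
    then have "w \<in> nbr V E b" using eq by auto
    then show "E w b" using sym unfolding nbr_def by auto
  next
    assume "E w b"
    then have "w \<in> nbr V E b - {a}" using sym inV assms(3) unfolding nbr_def by auto
    then have "w \<in> nbr V E a" using eq by auto
    then show "E w a" using sym unfolding nbr_def by auto
  qed
qed

lemma part1:
  fixes V :: "'a set" and E :: "'a \<Rightarrow> 'a \<Rightarrow> bool" and t :: "'a \<Rightarrow> nat"
    and Vs :: "nat \<Rightarrow> 'a set" and nd i :: nat
  assumes G: "threshold_graph V E t"
    and P: "type_partition V E Vs nd"
    and i: "i \<in> {1..nd}"
  assumes H: "X \<subseteq> V \<and> X = diffusion X E t {}
        \<and> umax \<in> X \<inter> Vs i \<and> (\<forall>w \<in> X \<inter> Vs i. t w \<le> t umax)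
        \<and> v \<in> Yset V E t X \<inter> Vs i \<and> t v \<le> t umax"
  shows "let X' = (X - {umax}) \<union> {v} in
              X' = diffusion X' E t {} \<and> card (Yset V E t X') = card (Yset V E t X)"
proof -
  have finV: "finite V" and sym: "\<And>x y. E x y \<Longrightarrow> E y x"
    and inV: "\<And>x y. E x y \<Longrightarrow> x \<in> V \<and> y \<in> V" and irr: "\<And>x. \<not> E x x"
    using G unfolding threshold_graph_def by blast+
  have ST: "\<And>a b. a \<in> Vs i \<Longrightarrow> b \<in> Vs i \<Longrightarrow> same_type V E a b"
    using P i unfolding type_partition_def by blast
  define X' where "X' = (X - {umax}) \<union> {v}"
  define f where "f = (\<lambda>z. if z = umax then v else z)"
  have XV: "X \<subseteq> V" and XD: "X = diffusion X E t {}" and um: "umax \<in> X" "umax \<in> Vs i"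
    and vY: "v \<in> Yset V E t X" and vi: "v \<in> Vs i" and tv: "t v \<le> t umax" using H by auto
  have vX: "v \<notin> X" and vV: "v \<in> V" using vY unfolding Yset_def by auto
  have finX: "finite X" using XV finV finite_subset by blast
  have X'V: "X' \<subseteq> V" using XV vV unfolding X'_def by auto
  have finX': "finite X'" using X'V finV finite_subset by blast
  have adj: "\<And>w. w \<noteq> umax \<Longrightarrow> w \<noteq> v \<Longrightarrow> E w umax \<longleftrightarrow> E w v"
    using same_type_adj[OF G ST[OF um(2) vi]] by blast
  have injf: "\<And>A. v \<notin> A \<Longrightarrow> inj_on f A" unfolding f_def by (rule swap_inj)
  have fX: "f ` X = X'" unfolding f_def X'_def using um vX by auto
  have key: "f ` diff_seq X E t {} k \<subseteq> diff_seq X' E t {} k" for k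
  proof (induction k)
    case 0
    show ?case
    proof
      fix y assume "y \<in> f ` diff_seq X E t {} 0"
      then obtain z where z: "z \<in> X" "t z = 0" "y = f z" by auto
      show "y \<in> diff_seq X' E t {} 0"
        using z tv fX by (auto simp: f_def split: if_splits)
    qed
  next
    case (Suc k)
    show ?case
    proof
      fix y assume "y \<in> f ` diff_seq X E t {} (Suc k)"
      then obtain z where z: "z \<in> diff_seq X E t {} (Suc k)" "y = f z" by auto
      show "y \<in> diff_seq X' E t {} (Suc k)"
      proof (cases "z \<in> diff_seq X E t {} k")
        case True then show ?thesis using Suc z by auto
      next
        case False
        then have zX: "z \<in> X" and cz: "t z \<le> card (nbr X E z \<inter> diff_seq X E t {} k)"
          using z by auto
        have sub0: "diff_seq X E t {} k \<subseteq> X" using ds_sub[of X E t "{}" k] by blast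
        have vnot: "v \<notin> nbr X E z \<inter> diff_seq X E t {} k" using vX unfolding nbr_def by auto
        have "y \<in> X'" using zX fX z by auto
        moreover have "t y \<le> card (nbr X' E y \<inter> diff_seq X' E t {} k)"
        proof (cases "z = umax")
          case True
          then have yv: "y = v" using z f_def by auto
          have "nbr X E umax \<inter> diff_seq X E t {} k \<subseteq> nbr X' E v \<inter> diff_seq X' E t {} k"
          proof
            fix w assume w: "w \<in> nbr X E umax \<inter> diff_seq X E t {} k"
            then have "w \<noteq> umax" "w \<noteq> v" "E umax w" "w \<in> X" using irr vX unfolding nbr_def by auto
            moreover have "f w = w" using \<open>w \<noteq> umax\<close> f_def by auto
            ultimately show "w \<in> nbr X' E v \<inter> diff_seq X' E t {} k"
              using adj[of w] sym w Suc.IH unfolding nbr_def X'_def by force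
          qed
          then have "card (nbr X E umax \<inter> diff_seq X E t {} k) \<le> card (nbr X' E v \<inter> diff_seq X' E t {} k)"
            by (intro card_mono) (use finX' in \<open>auto simp: nbr_def\<close>)
          then show ?thesis using cz True yv tv by auto
        next
          case False
          then have yz: "y = z" using z f_def by auto
          have "f ` (nbr X E z \<inter> diff_seq X E t {} k) \<subseteq> nbr X' E z \<inter> diff_seq X' E t {} k"
          proof
            fix y' assume "y' \<in> f ` (nbr X E z \<inter> diff_seq X E t {} k)"
            then obtain w where w: "w \<in> nbr X E z \<inter> diff_seq X E t {} k" "y' = f w" by auto
            have wz: "w \<noteq> z" using w irr unfolding nbr_def by auto
            have zv: "z \<noteq> v" using zX vX by auto
            have "y' \<in> diff_seq X' E t {} k" using w Suc.IH by auto
            moreover have "y' \<in> X'" using w fX unfolding nbr_def by auto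
            moreover have "E z y'"
            proof (cases "w = umax")
              case True
              then have "E z umax" using w unfolding nbr_def by auto
              then have "E z v" using adj[of z] False zv by auto
              then show ?thesis using True w f_def by auto
            next
              case False
              then show ?thesis using w f_def unfolding nbr_def by auto
            qed
            ultimately show "y' \<in> nbr X' E z \<inter> diff_seq X' E t {} k" unfolding nbr_def by auto
          qed
          then have "card (f ` (nbr X E z \<inter> diff_seq X E t {} k)) \<le> card (nbr X' E z \<inter> diff_seq X' E t {} k)"
            by (intro card_mono) (use finX' in \<open>auto simp: nbr_def\<close>)
          moreover have "card (f ` (nbr X E z \<inter> diff_seq X E t {} k)) = card (nbr X E z \<inter> diff_seq X E t {} k)"
            by (rule card_image[OF injf[OF vnot]])
          ultimately show ?thesis using cz yz by auto
        qed
        ultimately show ?thesis by auto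
      qed
    qed
  qed
  have D1: "X' = diffusion X' E t {}"
  proof
    show "diffusion X' E t {} \<subseteq> X'" using diffusion_sub[of X' E t "{}"] by blast
    show "X' \<subseteq> diffusion X' E t {}"
    proof
      fix y assume "y \<in> X'"
      then obtain z where "z \<in> X" "y = f z" using fX by auto
      then obtain k where "z \<in> diff_seq X E t {} k" using XD unfolding diffusion_def by auto
      then have "y \<in> diff_seq X' E t {} k" using key \<open>y = f z\<close> by auto
      then show "y \<in> diffusion X' E t {}" unfolding diffusion_def by auto
    qed
  qed
  have cnt: "card (nbr V E z \<inter> X') = card (nbr V E z \<inter> X)" if "z \<in> V" "z \<notin> X" "z \<noteq> v" for z
  proof -
    have zu: "z \<noteq> umax" using that um by auto
    have "f ` (nbr V E z \<inter> X) = nbr V E z \<inter> X'"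
    proof
      show "f ` (nbr V E z \<inter> X) \<subseteq> nbr V E z \<inter> X'"
        using adj[OF zu that(3)] fX vV unfolding nbr_def f_def by auto
      show "nbr V E z \<inter> X' \<subseteq> f ` (nbr V E z \<inter> X)"
      proof
        fix w assume w: "w \<in> nbr V E z \<inter> X'"
        show "w \<in> f ` (nbr V E z \<inter> X)"
        proof (cases "w = v")
          case True
          then have "umax \<in> nbr V E z \<inter> X" using w adj[OF zu that(3)] um XV unfolding nbr_def by auto
          then show ?thesis using True f_def by force
        next
          case False
          then have "w \<in> nbr V E z \<inter> X" "w \<noteq> umax" using w unfolding X'_def by auto
          then show ?thesis using f_def by force
        qed
      qed
    qed
    moreover have "inj_on f (nbr V E z \<inter> X)" using injf vX by auto
    ultimately show ?thesis using card_image by metis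
  qed
  have umY: "umax \<in> Yset V E t X'"
  proof -
    obtain k where "umax \<in> diff_seq X E t {} k" using um XD unfolding diffusion_def by auto
    then have "t umax \<le> card (nbr X E umax \<inter> diffusion X E t {})"
      using diffusion_count[OF finX] by blast
    also have "\<dots> = card (nbr V E umax \<inter> X)" unfolding XD[symmetric]
      by (rule arg_cong[where f=card]) (use XV in \<open>auto simp: nbr_def\<close>)
    also have "\<dots> \<le> card (nbr V E umax \<inter> X')"
      by (intro card_mono) (use finX' irr in \<open>auto simp: nbr_def X'_def\<close>)
    finally show ?thesis using D1 um XV vX unfolding Yset_def X'_def by auto
  qed
  have YX': "Yset V E t X' = (Yset V E t X - {v}) \<union> {umax}"
  proof
    show "Yset V E t X' \<subseteq> (Yset V E t X - {v}) \<union> {umax}"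
    proof
      fix z assume z: "z \<in> Yset V E t X'"
      show "z \<in> (Yset V E t X - {v}) \<union> {umax}"
      proof (cases "z = umax")
        case False
        then have "z \<in> V" "z \<notin> X" "z \<noteq> v" "t z \<le> card (nbr V E z \<inter> X')"
          using z D1 unfolding Yset_def X'_def by auto
        then show ?thesis using cnt XD[symmetric] unfolding Yset_def by auto
      qed blast
    qed
    show "(Yset V E t X - {v}) \<union> {umax} \<subseteq> Yset V E t X'"
    proof
      fix z assume z: "z \<in> (Yset V E t X - {v}) \<union> {umax}"
      show "z \<in> Yset V E t X'"
      proof (cases "z = umax")
        case False
        then have "z \<in> V" "z \<notin> X" "z \<noteq> v" "t z \<le> card (nbr V E z \<inter> X)"
          using z XD[symmetric] unfolding Yset_def by auto
        then show ?thesis using cnt[of z] D1 False unfolding Yset_def X'_def by auto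
      next
        case True
        then show ?thesis using umY by (simp only:)
      qed
    qed
  qed
  have finY: "finite (Yset V E t X)" using finV unfolding Yset_def by auto
  have "umax \<notin> Yset V E t X" using um unfolding Yset_def by auto
  then have "card (Yset V E t X') = card (Yset V E t X)"
    using YX' finY vY card.remove[OF finY vY] by (simp add: card_insert_if)
  then show "let X' = (X - {umax}) \<union> {v} in
            X' = diffusion X' E t {} \<and> card (Yset V E t X') = card (Yset V E t X)"
    using D1 unfolding X'_def Let_def by auto
qed

lemma part2:
  fixes V :: "'a set" and E :: "'a \<Rightarrow> 'a \<Rightarrow> bool" and t :: "'a \<Rightarrow> nat"
    and Vs :: "nat \<Rightarrow> 'a set" and nd i :: nat
  assumes G: "threshold_graph V E t"
    and P: "type_partition V E Vs nd"
    and i: "i \<in> {1..nd}"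
  assumes H: "Y \<subseteq> V
        \<and> vmax \<in> Y \<inter> Vs i \<and> (\<forall>w \<in> Y \<inter> Vs i. t w \<le> t vmax)
        \<and> u \<in> diffusion V E t Y \<inter> Vs i \<and> t u \<le> t vmax"
  shows "card (diffusion V E t ((Y - {vmax}) \<union> {u})) \<le> card (diffusion V E t Y)"
proof -
  have finV: "finite V" and sym: "\<And>x y. E x y \<Longrightarrow> E y x"
    and inV: "\<And>x y. E x y \<Longrightarrow> x \<in> V \<and> y \<in> V" and irr: "\<And>x. \<not> E x x"
    using G unfolding threshold_graph_def by blast+
  have ST: "\<And>a b. a \<in> Vs i \<Longrightarrow> b \<in> Vs i \<Longrightarrow> same_type V E a b"
    using P i unfolding type_partition_def by blast
  define Y' where "Y' = (Y - {vmax}) \<union> {u}"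
  define D where "D = diffusion V E t Y"
  define h where "h = (\<lambda>z. if z = vmax then u else z)"
  have vm: "vmax \<in> Y" "vmax \<in> Vs i" and uD: "u \<in> D" and ui: "u \<in> Vs i"
    using H unfolding D_def by auto
  have DV: "D \<subseteq> V - Y" unfolding D_def by (rule diffusion_sub)
  have uV: "u \<in> V" "u \<notin> Y" using uD DV by auto
  have adj: "\<And>w. w \<noteq> vmax \<Longrightarrow> w \<noteq> u \<Longrightarrow> E w vmax \<longleftrightarrow> E w u"
    using same_type_adj[OF G ST[OF vm(2) ui]] by blast
  have key: "diff_seq V E t Y' k \<subseteq> (D - {u}) \<union> {vmax}" for k
  proof (induction k)
    case 0
    show ?case
    proof
      fix w assume w: "w \<in> diff_seq V E t Y' 0"
      show "w \<in> (D - {u}) \<union> {vmax}"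
      proof (cases "w = vmax")
        case False
        then have "w \<in> diff_seq V E t Y 0" "w \<noteq> u" using w unfolding Y'_def by auto
        then show ?thesis unfolding D_def diffusion_def by blast
      qed blast
    qed
  next
    case (Suc k)
    show ?case
    proof
      fix w assume w: "w \<in> diff_seq V E t Y' (Suc k)"
      show "w \<in> (D - {u}) \<union> {vmax}"
      proof (cases "w \<in> diff_seq V E t Y' k \<or> w = vmax")
        case True then show ?thesis using Suc by auto
      next
        case False
        then have wV: "w \<in> V" "w \<notin> Y'" "w \<noteq> vmax"
          and cw: "t w \<le> card (nbr V E w \<inter> diff_seq V E t Y' k)" using w by auto
        have wu: "w \<noteq> u" and wY: "w \<notin> Y" using wV unfolding Y'_def by auto
        have unot: "u \<notin> nbr V E w \<inter> diff_seq V E t Y' k"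
          using ds_sub[of V E t Y' k] unfolding Y'_def by auto
        have "h ` (nbr V E w \<inter> diff_seq V E t Y' k) \<subseteq> nbr V E w \<inter> D"
        proof
          fix y assume "y \<in> h ` (nbr V E w \<inter> diff_seq V E t Y' k)"
          then obtain z where z: "z \<in> nbr V E w \<inter> diff_seq V E t Y' k" "y = h z" by auto
          show "y \<in> nbr V E w \<inter> D"
          proof (cases "z = vmax")
            case True
            then have "E w u" using z adj[OF wV(3) wu] unfolding nbr_def by auto
            then show ?thesis using True z uD uV unfolding h_def nbr_def by auto
          next
            case False
            then show ?thesis using z Suc.IH unfolding h_def nbr_def by auto
          qed
        qed
        then have "card (h ` (nbr V E w \<inter> diff_seq V E t Y' k)) \<le> card (nbr V E w \<inter> D)"
          by (intro card_mono) (use finV in \<open>auto simp: nbr_def\<close>)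
        moreover have "card (h ` (nbr V E w \<inter> diff_seq V E t Y' k)) = card (nbr V E w \<inter> diff_seq V E t Y' k)"
          unfolding h_def by (rule card_image[OF swap_inj[OF unot]])
        ultimately have "t w \<le> card (nbr V E w \<inter> D)" using cw by auto
        then have "w \<in> D" unfolding D_def using diffusion_closed[OF finV] wV wY by blast
        then show ?thesis using wu by auto
      qed
    qed
  qed
  have sub: "diffusion V E t Y' \<subseteq> (D - {u}) \<union> {vmax}"
    unfolding diffusion_def using key by blast
  have finD: "finite D" using DV finV finite_subset by blast
  have "card (diffusion V E t Y') \<le> card ((D - {u}) \<union> {vmax})"
    by (rule card_mono) (use finD sub in auto)
  also have "\<dots> \<le> card (D - {u}) + 1" using card_insert_le_m1 finD
    by (simp add: card_insert_if)
  also have "\<dots> = card D" using card.remove[OF finD uD] by simp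
  finally show "card (diffusion V E t ((Y - {vmax}) \<union> {u})) \<le> card (diffusion V E t Y)"
    unfolding Y'_def D_def by simp
qed

theorem proposition3:
  fixes V :: "'a set" and E :: "'a \<Rightarrow> 'a \<Rightarrow> bool" and t :: "'a \<Rightarrow> nat"
    and Vs :: "nat \<Rightarrow> 'a set" and nd i :: nat
  assumes G: "threshold_graph V E t"
    and P: "type_partition V E Vs nd"
    and i: "i \<in> {1..nd}"
  shows
    "(\<forall>X umax v. X \<subseteq> V \<and> X = diffusion X E t {}
        \<and> umax \<in> X \<inter> Vs i \<and> (\<forall>w \<in> X \<inter> Vs i. t w \<le> t umax)
        \<and> v \<in> Yset V E t X \<inter> Vs i \<and> t v \<le> t umax
        \<longrightarrow> (let X' = (X - {umax}) \<union> {v} in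
              X' = diffusion X' E t {} \<and> card (Yset V E t X') = card (Yset V E t X)))
     \<and>
     (\<forall>Y vmax u. Y \<subseteq> V
        \<and> vmax \<in> Y \<inter> Vs i \<and> (\<forall>w \<in> Y \<inter> Vs i. t w \<le> t vmax)
        \<and> u \<in> diffusion V E t Y \<inter> Vs i \<and> t u \<le> t vmax
        \<longrightarrow> card (diffusion V E t ((Y - {vmax}) \<union> {u})) \<le> card (diffusion V E t Y))"
  apply (intro conjI allI impI)
   apply (erule part1[OF G P i])
  apply (erule part2[OF G P i])
  done

end
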